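(* For every integer $0\le k\le n$, the set $H_n^k$ is a single orbit of the action $(\pi,\sigma)\bullet A=\pi A\sigma^{-1}$ of $S_n\times S_n$; more explicitly, $$H_n^k=\{\pi\, U_{n,k}\,\sigma \mid \pi,\sigma\in S_n\}.$$
   Context: Permutations are composed as functions, and $\pi\in S_n$ is identified with the $n\times n$ permutation matrix whose $(i,j)$ entry is $1$ iff $i=\pi(j)$. For $A\in GL_n(\mathbb{Z}_2)$ let $\eta(A)$ be the partition obtained by sorting the row sums of $A$ (number of entries equal to $1$ in each row, computed as integers) in weakly decreasing order, and $\theta(A)$ the analogous partition for the column sums. For $0\le k\le n$ define $$H_n^k=\{A\in GL_n(\mathbb{Z}_2)\mid \eta(A)=(n,n-1,\dots,n-k+1,\underbrace{1,\dots,1}_{n-k}),\ \theta(A)=(\underbrace{k+1,\dots,k+1}_{n-k},k,k-1,\dots,2,1)\}.$$ $U_{n,k}$ is the $n\times n$ $(0,1)$-matrix whose upper left $k\times k$ block is upper triangular with all entries on and above the diagonal equal to $1$, whose upper right $k\times(n-k)$ block has all entries $1$, whose lower left $(n-k)\times k$ block is zero, and whose lower right $(n-k)\times(n-k)$ block is the identity $I_{n-k}$. *)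

theory Defs
  imports "Jordan_Normal_Form.Matrix" "HOL-Library.Z2" "HOL-Combinatorics.Permutations"
begin

text \<open>Matrices over Z_2 are Jordan_Normal_Form matrices with entries in the field type bit.
Indices are 0-based: rows and columns range over 0..n-1.\<close>

definition perm_mat :: "nat \<Rightarrow> (nat \<Rightarrow> nat) \<Rightarrow> bit mat" where
  "perm_mat n p = mat n n (\<lambda>(i,j). if i = p j then 1 else 0)"

definition GL2 :: "nat \<Rightarrow> bit mat set" where
  "GL2 n = {A. A \<in> carrier_mat n n \<and> invertible_mat A}"

definition eta :: "bit mat \<Rightarrow> nat list" where
  "eta A = rev (sort (map (\<lambda>i. card {j. j < dim_col A \<and> A $$ (i,j) = 1}) [0..<dim_row A]))"

definition theta :: "bit mat \<Rightarrow> nat list" where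
  "theta A = rev (sort (map (\<lambda>j. card {i. i < dim_row A \<and> A $$ (i,j) = 1}) [0..<dim_col A]))"

definition eta_target :: "nat \<Rightarrow> nat \<Rightarrow> nat list" where
  "eta_target n k = map (\<lambda>i. n - i) [0..<k] @ replicate (n - k) 1"

definition theta_target :: "nat \<Rightarrow> nat \<Rightarrow> nat list" where
  "theta_target n k = replicate (n - k) (k + 1) @ map (\<lambda>i. k - i) [0..<k]"

definition H :: "nat \<Rightarrow> nat \<Rightarrow> bit mat set" where
  "H n k = {A \<in> GL2 n. eta A = eta_target n k \<and> theta A = theta_target n k}"

definition U :: "nat \<Rightarrow> nat \<Rightarrow> bit mat" where
  "U n k = mat n n (\<lambda>(i,j). if i < k then (if i \<le> j then 1 else 0)
                           else (if j = i then 1 else 0))"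

end

theory Submission
  imports Defs "Jordan_Normal_Form.Determinant"
begin


lemma sum_identity:
  "a0 \<le> (n::nat) \<Longrightarrow> (\<Sum>a<a0. n - a) = (\<Sum>b<a0. b + 1) + a0 * (n - a0)"
proof (induction a0)
  case 0 then show ?case by simp
next
  case (Suc m)
  then have "(\<Sum>a<Suc m. n - a) = (\<Sum>b<m. b + 1) + m * (n - m) + (n - m)" by simp
  also have "\<dots> = (\<Sum>b<Suc m. b + 1) + Suc m * (n - Suc m)"
  proof -
    obtain d where d: "n - m = Suc d" "n - Suc m = d" using Suc.prems
      by (metis Suc_diff_Suc Suc_le_lessD)
    have "m * (n - m) + (n - m) = (m + 1) + Suc m * (n - Suc m)"
      unfolding d by (simp add: algebra_simps)
    then show ?thesis by simp
  qed
  finally show ?case .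
qed

lemma block_lemma:
  fixes B :: "nat \<Rightarrow> nat \<Rightarrow> bool"
  assumes kn: "k \<le> n" and a0k: "a0 \<le> k"
  and rows: "\<And>a. a<n \<Longrightarrow> card {b. b<n \<and> B a b} = (if a<k then n-a else 1)"
  and cols: "\<And>b. b<n \<Longrightarrow> card {a. a<n \<and> B a b} = (if b<k then b+1 else k+1)"
  shows "(\<forall>a b. a0 \<le> a \<longrightarrow> a<n \<longrightarrow> b < a0 \<longrightarrow> \<not>B a b) \<and> (\<forall>a b. a<a0 \<longrightarrow> a0 \<le> b \<longrightarrow> b < n \<longrightarrow> B a b)"
proof -
  define S11 where "S11 = {(a,b). a<a0 \<and> b<a0 \<and> B a b}"
  define S12 where "S12 = {(a,b). a<a0 \<and> a0\<le>b \<and> b<n \<and> B a b}"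
  define S21 where "S21 = {(a,b). a0\<le>a \<and> a<n \<and> b<a0 \<and> B a b}"
  have fin11: "finite S11" by (rule finite_subset[of _ "{..<a0} \<times> {..<a0}"]) (auto simp: S11_def)
  have fin12: "finite S12" by (rule finite_subset[of _ "{..<a0} \<times> {..<n}"]) (auto simp: S12_def)
  have fin21: "finite S21" by (rule finite_subset[of _ "{..<n} \<times> {..<a0}"]) (auto simp: S21_def)
  have R: "card S11 + card S12 = (\<Sum>a<a0. n - a)"
  proof -
    have "S11 \<union> S12 = Sigma {..<a0} (\<lambda>a. {b. b<n \<and> B a b})" using a0k kn
      by (auto simp: S11_def S12_def)
    then have "card (S11 \<union> S12) = (\<Sum>a<a0. card {b. b<n \<and> B a b})" by simp
    also have "\<dots> = (\<Sum>a<a0. n - a)" using rows a0k kn by (intro sum.cong) auto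
    finally show ?thesis using fin11 fin12
      by (subst card_Un_disjoint[symmetric]) (auto simp: S11_def S12_def)
  qed
  have C: "card S11 + card S21 = (\<Sum>b<a0. b + 1)"
  proof -
    have e: "S11 \<union> S21 = prod.swap ` Sigma {..<a0} (\<lambda>b. {a. a<n \<and> B a b})" using a0k kn
      by (force simp: S11_def S21_def image_iff)
    have "card (Sigma {..<a0} (\<lambda>b. {a. a<n \<and> B a b})) = (\<Sum>b<a0. card {a. a<n \<and> B a b})"
      by simp
    then have "card (S11 \<union> S21) = (\<Sum>b<a0. card {a. a<n \<and> B a b})"
      unfolding e by (subst card_image) (auto intro: swap_inj_on)
    also have "\<dots> = (\<Sum>b<a0. b + 1)" using cols a0k kn by (intro sum.cong) auto
    finally show ?thesis using fin11 fin21
      by (subst card_Un_disjoint[symmetric]) (auto simp: S11_def S21_def)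
  qed
  have "S12 \<subseteq> {..<a0} \<times> {a0..<n}" by (auto simp: S12_def)
  then have le: "card S12 \<le> a0 * (n - a0)"
    by (metis card_atLeastLessThan card_cartesian_product card_lessThan card_mono finite_SigmaI
        finite_atLeastLessThan finite_lessThan)
  have id: "(\<Sum>a<a0. n - a) = (\<Sum>b<a0. b + 1) + a0 * (n - a0)" using sum_identity a0k kn by simp
  have "card S21 = 0" using R C le id by linarith
  then have e21: "S21 = {}" using fin21 by simp
  have "card S12 = a0 * (n - a0)" using R C le id by linarith
  then have eq: "S12 = {..<a0} \<times> {a0..<n}"
    using \<open>S12 \<subseteq> _\<close> by (intro card_subset_eq) auto
  have 1: "\<not> B a b" if "a0 \<le> a" "a<n" "b<a0" for a b
  proof
    assume "B a b"
    then have "(a,b) \<in> S21" using that by (simp add: S21_def)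
    then show False using e21 by simp
  qed
  have 2: "B a b" if "a < a0" "a0 \<le> b" "b<n" for a b
  proof -
    have "(a,b) \<in> S12" using eq that by simp
    then show ?thesis by (simp add: S12_def)
  qed
  show ?thesis using 1 2 by blast
qed

lemma normal_form:
  fixes B :: "nat \<Rightarrow> nat \<Rightarrow> bool"
  assumes kn: "k \<le> n"
  and rows: "\<And>a. a<n \<Longrightarrow> card {b. b<n \<and> B a b} = (if a<k then n-a else 1)"
  and cols: "\<And>b. b<n \<Longrightarrow> card {a. a<n \<and> B a b} = (if b<k then b+1 else k+1)"
  shows "\<forall>a<k. \<forall>b<n. B a b \<longleftrightarrow> a \<le> b"
    and "\<forall>a b. k\<le>a \<longrightarrow> a<n \<longrightarrow> b<k \<longrightarrow> \<not> B a b"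
    and "\<exists>\<tau>. bij_betw \<tau> {k..<n} {k..<n} \<and> (\<forall>a b. k\<le>a \<longrightarrow> a<n \<longrightarrow> b<n \<longrightarrow> (B a b \<longleftrightarrow> b = \<tau> a))"
proof -
  have blk0: "\<not> B a b" if "a0 \<le> k" "a0 \<le> a" "a < n" "b < a0" for a0 a b
    using block_lemma[OF kn that(1) rows cols] that(2-4) by blast
  have blk1: "B a b" if "a0 \<le> k" "a < a0" "a0 \<le> b" "b < n" for a0 a b
    using block_lemma[OF kn that(1) rows cols] that(2-4) by blast
  show P1: "\<forall>a<k. \<forall>b<n. B a b \<longleftrightarrow> a \<le> b"
  proof (intro allI impI)
    fix a b assume a: "a < k" and b: "b < n"
    consider "b < a" | "a < b" | "a = b" by linarith
    then show "B a b \<longleftrightarrow> a \<le> b"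
    proof cases
      case 1
      then show ?thesis using blk0[of a a b] a b kn by simp
    next
      case 2
      then show ?thesis using blk1[of "a+1" a b] a b by simp
    next
      case 3
      have sub: "{a'. a'<n \<and> B a' b} \<subseteq> {..b}"
      proof
        fix x assume "x \<in> {a'. a'<n \<and> B a' b}"
        then show "x \<in> {..b}" using blk0[of "b+1" x b] a 3 by (cases "x \<le> b") auto
      qed
      have "card {a'. a'<n \<and> B a' b} = card {..b}" using cols[OF b] a 3 by simp
      then have "{a'. a'<n \<and> B a' b} = {..b}" using sub by (intro card_subset_eq) auto
      then show ?thesis using 3 b by auto
    qed
  qed
  have P2': "\<not> B a b" if "k\<le>a" "a<n" "b<k" for a b using blk0[of k a b] that by simp
  show P2: "\<forall>a b. k\<le>a \<longrightarrow> a<n \<longrightarrow> b<k \<longrightarrow> \<not> B a b" using P2' by blast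
  have tk: "k \<le> \<tau>' a" if "B a (\<tau>' a)" "k \<le> a" "a < n" for a \<tau>'
    using P2'[of a "\<tau>' a"] that by (cases "k \<le> \<tau>' a") auto
  define \<tau> where "\<tau> a = (THE b. b<n \<and> B a b)" for a
  have tau: "\<tau> a < n \<and> B a (\<tau> a) \<and> (\<forall>b. b<n \<longrightarrow> B a b \<longrightarrow> b = \<tau> a)" if "k \<le> a" "a < n" for a
  proof -
    have "card {b. b<n \<and> B a b} = 1" using rows[of a] that by simp
    then obtain b0 where b0: "{b. b<n \<and> B a b} = {b0}" by (rule card_1_singletonE)
    then have "\<tau> a = b0" unfolding \<tau>_def by (intro the_equality) auto
    then show ?thesis using b0 by auto
  qed
  have tau1: "\<tau> a < n" and tau2: "B a (\<tau> a)" if "k \<le> a" "a < n" for a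
    using tau[OF that] by simp_all
  have tau3: "b = \<tau> a" if "k \<le> a" "a < n" "b < n" "B a b" for a b
    using tau[OF that(1,2)] that(3,4) by blast
  have colk: "card {a. k \<le> a \<and> a<n \<and> B a b} = 1" if "k \<le> b" "b < n" for b
  proof -
    have "{a. a<n \<and> B a b} = {..<k} \<union> {a. k \<le> a \<and> a<n \<and> B a b}"
      using P1 that kn by auto
    moreover have "card ({..<k} \<union> {a. k \<le> a \<and> a<n \<and> B a b}) = k + card {a. k \<le> a \<and> a<n \<and> B a b}"
      by (subst card_Un_disjoint) auto
    ultimately have "card {a. a<n \<and> B a b} = k + card {a. k \<le> a \<and> a<n \<and> B a b}"
      by simp
    then show ?thesis using cols[of b] that by simp
  qed
  have inj: "inj_on \<tau> {k..<n}"
  proof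
    fix x y assume x: "x \<in> {k..<n}" and y: "y \<in> {k..<n}" and e: "\<tau> x = \<tau> y"
    have tx: "k \<le> \<tau> x" using tk[of x \<tau>] tau2[of x] x by simp
    have txn: "\<tau> x < n" using tau1[of x] x by simp
    have "card {a. k \<le> a \<and> a<n \<and> B a (\<tau> x)} = 1" using colk[OF tx txn] .
    then obtain a0 where a0: "{a. k \<le> a \<and> a<n \<and> B a (\<tau> x)} = {a0}"
      by (rule card_1_singletonE)
    have x': "k \<le> x" "x < n" using x by auto
    have "x \<in> {a. k \<le> a \<and> a<n \<and> B a (\<tau> x)}" using tau2[OF x'] x' by (intro CollectI conjI)
    moreover have "y \<in> {a. k \<le> a \<and> a<n \<and> B a (\<tau> x)}"
    proof -
      have y': "k \<le> y" "y < n" using y by auto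
      have "B y (\<tau> y)" using tau2[OF y'] .
      then have "B y (\<tau> x)" by (simp only: e)
      then show ?thesis using y' by (intro CollectI conjI)
    qed
    ultimately have "x \<in> {a0}" "y \<in> {a0}" by (simp_all only: a0)
    then show "x = y" by simp
  qed
  have img: "\<tau> ` {k..<n} \<subseteq> {k..<n}"
  proof
    fix y assume "y \<in> \<tau> ` {k..<n}"
    then obtain a where a: "a \<in> {k..<n}" and y: "y = \<tau> a" by blast
    have "\<tau> a < n" "B a (\<tau> a)" using tau1[of a] tau2[of a] a by auto
    moreover have "k \<le> \<tau> a" using tk[of a \<tau>] a \<open>B a (\<tau> a)\<close> by simp
    ultimately show "y \<in> {k..<n}" using y by simp
  qed
  have bij: "bij_betw \<tau> {k..<n} {k..<n}"
    unfolding bij_betw_def using inj endo_inj_surj[OF _ img inj] by simp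
  show "\<exists>\<tau>. bij_betw \<tau> {k..<n} {k..<n} \<and> (\<forall>a b. k\<le>a \<longrightarrow> a<n \<longrightarrow> b<n \<longrightarrow> (B a b \<longleftrightarrow> b = \<tau> a))"
  proof (intro exI[of _ \<tau>] conjI bij allI impI)
    fix a b assume "k \<le> a" "a < n" "b < n"
    then show "B a b \<longleftrightarrow> b = \<tau> a" using tau2[of a] tau3[of a b] by blast
  qed
qed





lemma perm_entry:
  assumes p: "\<pi> permutes {..<n}" and s: "\<sigma> permutes {..<n}" and M: "M \<in> carrier_mat n n"
    and i: "i < n" and j: "j < n"
  shows "(perm_mat n \<pi> * M * perm_mat n \<sigma>) $$ (i,j) = M $$ (inv_into UNIV \<pi> i, \<sigma> j)"
proof -
  have ipi: "inv_into UNIV \<pi> i < n" using permutes_in_image[OF permutes_inv[OF p]] i by simp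
  have sj: "\<sigma> j < n" using permutes_in_image[OF s] j by simp
  have PM: "(perm_mat n \<pi> * M) $$ (i,l) = M $$ (inv_into UNIV \<pi> i, l)" if l: "l < n" for l
  proof -
    have "(perm_mat n \<pi> * M) $$ (i,l) = (\<Sum>m\<in>{0..<n}. (if i = \<pi> m then 1 else 0) * M $$ (m,l))"
      using i l M by (simp add: perm_mat_def scalar_prod_def)
    also have "\<dots> = (\<Sum>m\<in>{0..<n}. (if m = inv_into UNIV \<pi> i then M $$ (m,l) else 0))"
    proof (intro sum.cong refl)
      fix m
      have "(i = \<pi> m) = (m = inv_into UNIV \<pi> i)" using permutes_inv_eq[OF p, of i m] by auto
      then show "(if i = \<pi> m then 1 else 0) * M $$ (m,l) = (if m = inv_into UNIV \<pi> i then M $$ (m,l) else 0)"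
        by simp
    qed
    also have "\<dots> = M $$ (inv_into UNIV \<pi> i, l)" using ipi by simp
    finally show ?thesis .
  qed
  have "(perm_mat n \<pi> * M * perm_mat n \<sigma>) $$ (i,j)
      = (\<Sum>l\<in>{0..<n}. (perm_mat n \<pi> * M) $$ (i,l) * (if l = \<sigma> j then 1 else 0))"
    using i j M by (simp add: perm_mat_def scalar_prod_def)
  also have "\<dots> = (\<Sum>l\<in>{0..<n}. (if l = \<sigma> j then (perm_mat n \<pi> * M) $$ (i,l) else 0))"
    by (intro sum.cong refl) auto
  also have "\<dots> = (perm_mat n \<pi> * M) $$ (i, \<sigma> j)" using sj by simp
  also have "\<dots> = M $$ (inv_into UNIV \<pi> i, \<sigma> j)" using PM sj by simp
  finally show ?thesis .
qed

lemma perm_mat_carrier[simp]: "perm_mat n p \<in> carrier_mat n n"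
  by (simp add: perm_mat_def)

lemma perm_mat_dims[simp]: "dim_row (perm_mat n p) = n" "dim_col (perm_mat n p) = n"
  by (simp_all add: perm_mat_def)

lemma U_dims[simp]: "dim_row (U n k) = n" "dim_col (U n k) = n"
  by (simp_all add: U_def)

lemma U_carrier[simp]: "U n k \<in> carrier_mat n n"
  by (simp add: U_def)

lemma card_perm_reindex:
  assumes s: "\<sigma> permutes {..<n}"
  shows "card {j. j<n \<and> P (\<sigma> j)} = card {j. j<n \<and> P j}"
proof -
  have "\<sigma> ` {j. j<n \<and> P (\<sigma> j)} = {j. j<n \<and> P j}"
  proof (intro equalityI subsetI)
    fix y assume "y \<in> \<sigma> ` {j. j<n \<and> P (\<sigma> j)}"
    then obtain j where "j < n" "P (\<sigma> j)" "y = \<sigma> j" by blast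
    then show "y \<in> {j. j<n \<and> P j}" using permutes_in_image[OF s, of j] by simp
  next
    fix y assume y: "y \<in> {j. j<n \<and> P j}"
    have "inv_into UNIV \<sigma> y < n" using permutes_in_image[OF permutes_inv[OF s], of y] y by simp
    moreover have "\<sigma> (inv_into UNIV \<sigma> y) = y" using permutes_inverses(1)[OF s] by simp
    ultimately show "y \<in> \<sigma> ` {j. j<n \<and> P (\<sigma> j)}" using y
      by (metis (mono_tags, lifting) image_eqI mem_Collect_eq)
  qed
  moreover have "inj_on \<sigma> {j. j<n \<and> P (\<sigma> j)}"
    using permutes_inj[OF s] by (simp add: inj_on_def inj_def)
  ultimately show ?thesis by (metis card_image)
qed

lemma mset_map_perm:
  assumes g: "g permutes {..<n}"
  shows "mset (map (\<lambda>i. f (g i)) [0..<n]) = mset (map f [0..<n])"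
proof -
  have pl: "permute_list g [0..<n] = map g [0..<n]"
    unfolding permute_list_def
  proof (rule map_cong)
    show "[0..<length [0..<n]] = [0..<n]" by simp
  next
    fix x assume "x \<in> set [0..<n]"
    then have "x < n" by simp
    then have "g x < n" using permutes_in_image[OF g, of x] by simp
    then show "[0..<n] ! g x = g x" by simp
  qed
  have "mset (permute_list g [0..<n]) = mset [0..<n]"
    by (rule mset_permute_list) (simp add: g)
  then have "mset (map g [0..<n]) = mset [0..<n]" by (simp only: pl)
  then have "image_mset f (mset (map g [0..<n])) = image_mset f (mset [0..<n])"
    by (simp only:)
  then have "mset (map f (map g [0..<n])) = mset (map f [0..<n])"
    by (simp only: mset_map)
  then show ?thesis by (simp add: comp_def)
qed





definition thU :: "nat \<Rightarrow> nat \<Rightarrow> nat list" where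
  "thU n k = map Suc [0..<k] @ replicate (n - k) (k + 1)"

lemma rowsum_U:
  assumes "a < n"
  shows "card {j. j<n \<and> U n k $$ (a,j) = 1} = (if a<k then n-a else 1)"
proof (cases "a < k")
  case True
  then have "{j. j<n \<and> U n k $$ (a,j) = 1} = {a..<n}" using assms by (auto simp: U_def split: if_splits)
  then show ?thesis using True by simp
next
  case False
  then have "{j. j<n \<and> U n k $$ (a,j) = 1} = {a}" using assms by (auto simp: U_def split: if_splits)
  then show ?thesis using False by simp
qed

lemma colsum_U:
  assumes "b < n" "k \<le> n"
  shows "card {i. i<n \<and> U n k $$ (i,b) = 1} = (if b<k then b+1 else k+1)"
proof (cases "b < k")
  case True
  then have "{i. i<n \<and> U n k $$ (i,b) = 1} = {..b}" using assms by (auto simp: U_def split: if_splits)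
  then show ?thesis using True by simp
next
  case False
  then have "{i. i<n \<and> U n k $$ (i,b) = 1} = insert b {..<k}" using assms by (auto simp: U_def split: if_splits)
  then show ?thesis using False by simp
qed

lemma map_eta:
  assumes "k \<le> n"
  shows "map (\<lambda>a. if a<k then n-a else 1) [0..<n] = eta_target n k"
proof -
  have "[0..<n] = [0..<k] @ [k..<n]" using assms by (metis le0 upt_add_eq_append add_0 le_add_diff_inverse)
  moreover have "map (\<lambda>a. if a<k then n-a else 1) [k..<n] = map (\<lambda>_. 1) [k..<n]"
    by (intro map_cong) auto
  ultimately show ?thesis unfolding eta_target_def
    by (simp add: map_replicate_const)
qed

lemma map_thU:
  assumes "k \<le> n"
  shows "map (\<lambda>b. if b<k then b+1 else k+1) [0..<n] = thU n k"
proof -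
  have "[0..<n] = [0..<k] @ [k..<n]" using assms by (metis le0 upt_add_eq_append add_0 le_add_diff_inverse)
  moreover have "map (\<lambda>b. if b<k then b+1 else k+1) [k..<n] = map (\<lambda>_. k+1) [k..<n]"
    by (intro map_cong) auto
  ultimately show ?thesis unfolding thU_def
    by (simp add: map_replicate_const)
qed

lemma rev_thU: "rev (thU n k) = theta_target n k"
proof -
  have "rev (map Suc [0..<k]) = map (\<lambda>i. k - i) [0..<k]"
    by (rule nth_equalityI) (auto simp: rev_nth)
  then show ?thesis unfolding thU_def theta_target_def by simp
qed

lemma eta_sorted:
  assumes "k \<le> n"
  shows "rev (sort (eta_target n k)) = eta_target n k"
proof -
  have "sorted (rev (eta_target n k))"
    unfolding eta_target_def sorted_wrt_rev using assms
    by (auto simp: sorted_wrt_iff_nth_less nth_append)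
  then have "sort (eta_target n k) = rev (eta_target n k)"
    by (intro properties_for_sort) simp_all
  then show ?thesis by simp
qed

lemma theta_sorted:
  shows "rev (sort (thU n k)) = theta_target n k"
proof -
  have "sorted (thU n k)"
    unfolding thU_def sorted_append by (auto simp: sorted_iff_nth_mono)
  then have "sort (thU n k) = thU n k" by (rule sorted_sort_id)
  then show ?thesis by (simp only: rev_thU)
qed

lemma sort_mset_eq:
  assumes "mset X = mset (L::nat list)"
  shows "sort X = sort L"
proof -
  have "sort X = sorted_list_of_multiset (mset X)" by (simp only: sorted_list_of_multiset_mset)
  also have "\<dots> = sorted_list_of_multiset (mset L)" by (simp only: assms)
  also have "\<dots> = sort L" by (simp only: sorted_list_of_multiset_mset)
  finally show ?thesis .
qed

lemma eta_from_rows: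
  assumes "A \<in> carrier_mat n n"
    and "mset (map (\<lambda>i. card {j. j<n \<and> A $$ (i,j) = 1}) [0..<n]) = mset L"
  shows "eta A = rev (sort L)"
proof -
  have "dim_row A = n" "dim_col A = n" using assms(1) by auto
  then have "eta A = rev (sort (map (\<lambda>i. card {j. j<n \<and> A $$ (i,j) = 1}) [0..<n]))"
    unfolding eta_def by (simp only:)
  then show ?thesis using sort_mset_eq[OF assms(2)] by (simp only:)
qed

lemma theta_from_cols:
  assumes "A \<in> carrier_mat n n"
    and "mset (map (\<lambda>j. card {i. i<n \<and> A $$ (i,j) = 1}) [0..<n]) = mset L"
  shows "theta A = rev (sort L)"
proof -
  have "dim_row A = n" "dim_col A = n" using assms(1) by auto
  then have "theta A = rev (sort (map (\<lambda>j. card {i. i<n \<and> A $$ (i,j) = 1}) [0..<n]))"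
    unfolding theta_def by (simp only:)
  then show ?thesis using sort_mset_eq[OF assms(2)] by (simp only:)
qed

lemma rows_from_eta:
  assumes "A \<in> carrier_mat n n" "eta A = L"
  shows "mset (map (\<lambda>i. card {j. j<n \<and> A $$ (i,j) = 1}) [0..<n]) = mset L"
proof -
  have "dim_row A = n" "dim_col A = n" using assms(1) by auto
  then have "L = rev (sort (map (\<lambda>i. card {j. j<n \<and> A $$ (i,j) = 1}) [0..<n]))"
    using assms(2) unfolding eta_def by (simp only:)
  then have "mset L = mset (rev (sort (map (\<lambda>i. card {j. j<n \<and> A $$ (i,j) = 1}) [0..<n])))" by (simp only:)
  then show ?thesis by (simp only: mset_rev mset_sort)
qed

lemma cols_from_theta:
  assumes "A \<in> carrier_mat n n" "theta A = L"
  shows "mset (map (\<lambda>j. card {i. i<n \<and> A $$ (i,j) = 1}) [0..<n]) = mset L"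
proof -
  have "dim_row A = n" "dim_col A = n" using assms(1) by auto
  then have "L = rev (sort (map (\<lambda>j. card {i. i<n \<and> A $$ (i,j) = 1}) [0..<n]))"
    using assms(2) unfolding theta_def by (simp only:)
  then have "mset L = mset (rev (sort (map (\<lambda>j. card {i. i<n \<and> A $$ (i,j) = 1}) [0..<n])))" by (simp only:)
  then show ?thesis by (simp only: mset_rev mset_sort)
qed



lemma perm_mat_det:
  assumes p: "\<pi> permutes {..<n}"
  shows "det (perm_mat n \<pi>) \<noteq> 0"
proof -
  have pi: "inv_into UNIV \<pi> permutes {..<n}" using permutes_inv[OF p] .
  have "perm_mat n \<pi> * 1\<^sub>m n * perm_mat n (inv_into UNIV \<pi>) = 1\<^sub>m n"
  proof (rule eq_matI)
    fix i j assume i: "i < dim_row (1\<^sub>m n :: bit mat)" and j: "j < dim_col (1\<^sub>m n :: bit mat)"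
    have "inv_into UNIV \<pi> i < n" "inv_into UNIV \<pi> j < n"
      using permutes_in_image[OF pi] i j by auto
    moreover have "(inv_into UNIV \<pi> i = inv_into UNIV \<pi> j) = (i = j)"
      using permutes_inj[OF pi] by (auto simp: inj_def)
    ultimately show "(perm_mat n \<pi> * 1\<^sub>m n * perm_mat n (inv_into UNIV \<pi>)) $$ (i, j) = 1\<^sub>m n $$ (i, j)"
      using perm_entry[OF p pi one_carrier_mat, of i j] i j by simp
  qed (auto simp: perm_mat_def)
  moreover have "perm_mat n \<pi> * 1\<^sub>m n = perm_mat n \<pi>"
    by (rule right_mult_one_mat[OF perm_mat_carrier])
  ultimately have e: "perm_mat n \<pi> * perm_mat n (inv_into UNIV \<pi>) = 1\<^sub>m n"
    by (simp only:)
  have "det (perm_mat n \<pi> * perm_mat n (inv_into UNIV \<pi>)) = det (perm_mat n \<pi>) * det (perm_mat n (inv_into UNIV \<pi>))"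
    by (rule det_mult[OF perm_mat_carrier perm_mat_carrier])
  then have "det (perm_mat n \<pi>) * det (perm_mat n (inv_into UNIV \<pi>)) = 1"
    using e det_one by simp
  then show ?thesis by auto
qed

lemma U_det: "det (U n k) = 1"
proof -
  have ut: "upper_triangular (U n k)"
    by (rule upper_triangularI) (auto simp: U_def)
  have "diag_mat (U n k) = map (\<lambda>_. 1) [0..<n]"
    unfolding diag_mat_def by (intro map_cong) (auto simp: U_def)
  then have "prod_list (diag_mat (U n k)) = 1" by (simp add: map_replicate_const)
  then show ?thesis using det_upper_triangular[OF ut U_carrier] by simp
qed

lemma invertible_PUQ:
  assumes p: "\<pi> permutes {..<n}" and s: "\<sigma> permutes {..<n}"
  shows "invertible_mat (perm_mat n \<pi> * U n k * perm_mat n \<sigma>)"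
proof -
  let ?A = "perm_mat n \<pi> * U n k * perm_mat n \<sigma>"
  have A: "?A \<in> carrier_mat n n"
    by (rule mult_carrier_mat[OF mult_carrier_mat[OF perm_mat_carrier U_carrier] perm_mat_carrier])
  have "det ?A = det (perm_mat n \<pi>) * det (U n k) * det (perm_mat n \<sigma>)"
    using det_mult[OF mult_carrier_mat[OF perm_mat_carrier U_carrier] perm_mat_carrier]
      det_mult[OF perm_mat_carrier U_carrier] by simp
  then have "det ?A \<noteq> 0" using perm_mat_det[OF p] perm_mat_det[OF s] U_det by simp
  from det_non_zero_imp_unit[OF A this, of undefined]
  obtain B where B: "B \<in> carrier_mat n n" "B * ?A = 1\<^sub>m n" "?A * B = 1\<^sub>m n"
    unfolding Units_def ring_mat_def by auto
  show ?thesis unfolding invertible_mat_def inverts_mat_def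
  proof (intro conjI exI[of _ B])
    show "square_mat ?A" using A by simp
    show "?A * B = 1\<^sub>m (dim_row ?A)" using B(3) A by simp
    show "B * ?A = 1\<^sub>m (dim_row B)" using B(2) B(1) by simp
  qed
qed

lemma bit_eqI: "((x::bit) = 1 \<longleftrightarrow> y = 1) \<Longrightarrow> x = y"
  by (metis bit_not_one_iff)





lemma orbit_in_H:
  assumes kn: "k \<le> n" and p: "\<pi> permutes {..<n}" and s: "\<sigma> permutes {..<n}"
  shows "perm_mat n \<pi> * U n k * perm_mat n \<sigma> \<in> H n k"
proof -
  let ?A = "perm_mat n \<pi> * U n k * perm_mat n \<sigma>"
  let ?ip = "inv_into UNIV \<pi>"
  have ip: "?ip permutes {..<n}" using permutes_inv[OF p] .
  have A: "?A \<in> carrier_mat n n"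
    by (rule mult_carrier_mat[OF mult_carrier_mat[OF perm_mat_carrier U_carrier] perm_mat_carrier])
  have ent: "?A $$ (i,j) = U n k $$ (?ip i, \<sigma> j)" if "i < n" "j < n" for i j
    using perm_entry[OF p s U_carrier that] .
  have rows: "card {j. j<n \<and> ?A $$ (i,j) = 1} = (\<lambda>a. if a<k then n-a else 1) (?ip i)" if i: "i < n" for i
  proof -
    have "{j. j<n \<and> ?A $$ (i,j) = 1} = {j. j<n \<and> U n k $$ (?ip i, \<sigma> j) = 1}"
      using ent i by auto
    then have "card {j. j<n \<and> ?A $$ (i,j) = 1} = card {j. j<n \<and> U n k $$ (?ip i, j) = 1}"
      using card_perm_reindex[OF s, of "\<lambda>j. U n k $$ (?ip i, j) = 1"] by simp
    also have "\<dots> = (\<lambda>a. if a<k then n-a else 1) (?ip i)"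
      using rowsum_U permutes_in_image[OF ip, of i] i by simp
    finally show ?thesis .
  qed
  have "mset (map (\<lambda>i. card {j. j<n \<and> ?A $$ (i,j) = 1}) [0..<n])
      = mset (map (\<lambda>i. (\<lambda>a. if a<k then n-a else 1) (?ip i)) [0..<n])"
    by (intro arg_cong[where f=mset] map_cong refl) (simp add: rows)
  also have "\<dots> = mset (map (\<lambda>a. if a<k then n-a else 1) [0..<n])"
    by (rule mset_map_perm[OF ip])
  also have "\<dots> = mset (eta_target n k)" using map_eta[OF kn] by simp
  finally have eta: "eta ?A = eta_target n k"
    using eta_from_rows[OF A] eta_sorted[OF kn] by metis
  have cols: "card {i. i<n \<and> ?A $$ (i,j) = 1} = (\<lambda>b. if b<k then b+1 else k+1) (\<sigma> j)" if j: "j < n" for j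
  proof -
    have "{i. i<n \<and> ?A $$ (i,j) = 1} = {i. i<n \<and> U n k $$ (?ip i, \<sigma> j) = 1}"
      using ent j by auto
    then have "card {i. i<n \<and> ?A $$ (i,j) = 1} = card {i. i<n \<and> U n k $$ (i, \<sigma> j) = 1}"
      using card_perm_reindex[OF ip, of "\<lambda>i. U n k $$ (i, \<sigma> j) = 1"] by simp
    also have "\<dots> = (\<lambda>b. if b<k then b+1 else k+1) (\<sigma> j)"
      using colsum_U[OF _ kn] permutes_in_image[OF s, of j] j by simp
    finally show ?thesis .
  qed
  have "mset (map (\<lambda>j. card {i. i<n \<and> ?A $$ (i,j) = 1}) [0..<n])
      = mset (map (\<lambda>j. (\<lambda>b. if b<k then b+1 else k+1) (\<sigma> j)) [0..<n])"
    by (intro arg_cong[where f=mset] map_cong refl) (simp add: cols)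
  also have "\<dots> = mset (map (\<lambda>b. if b<k then b+1 else k+1) [0..<n])"
    by (rule mset_map_perm[OF s])
  also have "\<dots> = mset (thU n k)" using map_thU[OF kn] by simp
  finally have theta: "theta ?A = theta_target n k"
    using theta_from_cols[OF A] theta_sorted by metis
  show ?thesis unfolding H_def GL2_def
    using A invertible_PUQ[OF p s] eta theta by simp
qed


lemma H_in_orbit:
  assumes kn: "k \<le> n" and AH: "A \<in> H n k"
  shows "\<exists>\<pi> \<sigma>. A = perm_mat n \<pi> * U n k * perm_mat n \<sigma> \<and> \<pi> permutes {..<n} \<and> \<sigma> permutes {..<n}"
proof -
  have A: "A \<in> carrier_mat n n" and eA: "eta A = eta_target n k" and tA: "theta A = theta_target n k"
    using AH unfolding H_def GL2_def by auto
  define g where "g a = (if a<k then n-a else 1)" for a :: nat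
  define h where "h b = (if b<k then b+1 else k+1)" for b :: nat
  define rA where "rA i = card {j. j<n \<and> A $$ (i,j) = 1}" for i
  define cA where "cA j = card {i. i<n \<and> A $$ (i,j) = 1}" for j
  have mr: "mset (map rA [0..<n]) = mset (map g [0..<n])"
    using rows_from_eta[OF A eA] map_eta[OF kn] unfolding rA_def g_def by simp
  have "mset (theta_target n k) = mset (thU n k)" using rev_thU[of n k] by (metis mset_rev)
  then have mc: "mset (map cA [0..<n]) = mset (map h [0..<n])"
    using cols_from_theta[OF A tA] map_thU[OF kn] unfolding cA_def h_def by simp
  obtain p where p: "p permutes {..<length (map g [0..<n])}"
    and pl: "permute_list p (map g [0..<n]) = map rA [0..<n]"
    using mset_eq_permutation[OF mr] by blast
  have p': "p permutes {..<n}" using p by simp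
  have rAp: "rA i = g (p i)" if "i < n" for i
  proof -
    have "rA i = map rA [0..<n] ! i" using that by simp
    also have "\<dots> = map g [0..<n] ! p i" using permute_list_nth[OF p] that pl by (metis length_map length_upt minus_nat.diff_0)
    also have "\<dots> = g (p i)" using permutes_in_image[OF p', of i] that by simp
    finally show ?thesis .
  qed
  obtain q where q: "q permutes {..<length (map h [0..<n])}"
    and ql: "permute_list q (map h [0..<n]) = map cA [0..<n]"
    using mset_eq_permutation[OF mc] by blast
  have q': "q permutes {..<n}" using q by simp
  have cAq: "cA j = h (q j)" if "j < n" for j
  proof -
    have "cA j = map cA [0..<n] ! j" using that by simp
    also have "\<dots> = map h [0..<n] ! q j" using permute_list_nth[OF q] that ql by (metis length_map length_upt minus_nat.diff_0)
    also have "\<dots> = h (q j)" using permutes_in_image[OF q', of j] that by simp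
    finally show ?thesis .
  qed
  let ?ip = "inv_into UNIV p" and ?iq = "inv_into UNIV q"
  have ip: "?ip permutes {..<n}" using permutes_inv[OF p'] .
  have iq: "?iq permutes {..<n}" using permutes_inv[OF q'] .
  define B where "B a b = (A $$ (?ip a, ?iq b) = 1)" for a b
  have Brows: "card {b. b<n \<and> B a b} = (if a<k then n-a else 1)" if a: "a < n" for a
  proof -
    have "card {b. b<n \<and> B a b} = card {j. j<n \<and> A $$ (?ip a, j) = 1}"
      unfolding B_def using card_perm_reindex[OF iq, of "\<lambda>j. A $$ (?ip a, j) = 1"] by simp
    also have "\<dots> = rA (?ip a)" by (simp add: rA_def)
    also have "\<dots> = g (p (?ip a))" using rAp permutes_in_image[OF ip, of a] a by simp
    also have "\<dots> = g a" using permutes_inverses(1)[OF p'] by simp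
    finally show ?thesis by (simp add: g_def)
  qed
  have Bcols: "card {a. a<n \<and> B a b} = (if b<k then b+1 else k+1)" if b: "b < n" for b
  proof -
    have "card {a. a<n \<and> B a b} = card {i. i<n \<and> A $$ (i, ?iq b) = 1}"
      unfolding B_def using card_perm_reindex[OF ip, of "\<lambda>i. A $$ (i, ?iq b) = 1"] by simp
    also have "\<dots> = cA (?iq b)" by (simp add: cA_def)
    also have "\<dots> = h (q (?iq b))" using cAq permutes_in_image[OF iq, of b] b by simp
    also have "\<dots> = h b" using permutes_inverses(1)[OF q'] by simp
    finally show ?thesis by (simp add: h_def)
  qed
  note NF = normal_form[OF kn Brows Bcols]
  obtain \<tau> where tb: "bij_betw \<tau> {k..<n} {k..<n}"
    and tB: "\<And>a b. k\<le>a \<Longrightarrow> a<n \<Longrightarrow> b<n \<Longrightarrow> (B a b \<longleftrightarrow> b = \<tau> a)"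
    using NF(3) by blast
  have P1: "B a b \<longleftrightarrow> a \<le> b" if "a < k" "b < n" for a b using NF(1) that by blast
  define \<alpha> where "\<alpha> i = (if i < n then (if p i < k then p i else \<tau> (p i)) else i)" for i
  have pin: "p i < n" if "i < n" for i using permutes_in_image[OF p'] that by simp
  have tin: "\<tau> a \<in> {k..<n}" if "a \<in> {k..<n}" for a using tb that by (auto simp: bij_betw_def)
  have arange: "\<alpha> i < n" if "i < n" for i using pin[OF that] tin[of "p i"] that by (auto simp: \<alpha>_def)
  have ainj: "inj_on \<alpha> {..<n}"
  proof
    fix x y assume x: "x \<in> {..<n}" and y: "y \<in> {..<n}" and e: "\<alpha> x = \<alpha> y"
    have px: "p x < n" "p y < n" using pin x y by auto
    have "p x = p y"
    proof (cases "p x < k"; cases "p y < k")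
      assume "p x < k" "p y < k" then show ?thesis using e x y by (simp add: \<alpha>_def)
    next
      assume "p x < k" "\<not> p y < k"
      then show ?thesis using e x y tin[of "p y"] px by (simp add: \<alpha>_def)
    next
      assume "\<not> p x < k" "p y < k"
      then show ?thesis using e x y tin[of "p x"] px by (simp add: \<alpha>_def)
    next
      assume "\<not> p x < k" "\<not> p y < k"
      then have "\<tau> (p x) = \<tau> (p y)" using e x y by (simp add: \<alpha>_def)
      then show ?thesis using tb px \<open>\<not> p x < k\<close> \<open>\<not> p y < k\<close>
        unfolding bij_betw_def inj_on_def by simp
    qed
    then show "x = y" using permutes_inj[OF p'] by (simp add: inj_def)
  qed
  have "\<alpha> ` {..<n} = {..<n}"
    using endo_inj_surj[OF _ _ ainj] arange by auto
  then have abij: "bij_betw \<alpha> {..<n} {..<n}" using ainj by (simp add: bij_betw_def)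
  have aperm: "\<alpha> permutes {..<n}"
    by (rule bij_imp_permutes[OF abij]) (simp add: \<alpha>_def)
  have iaperm: "inv_into UNIV \<alpha> permutes {..<n}" using permutes_inv[OF aperm] .
  have iia: "inv_into UNIV (inv_into UNIV \<alpha>) = \<alpha>" using permutes_inv_inv[OF aperm] .
  have "A = perm_mat n (inv_into UNIV \<alpha>) * U n k * perm_mat n q"
  proof (rule eq_matI)
    fix i j assume i: "i < dim_row (perm_mat n (inv_into UNIV \<alpha>) * U n k * perm_mat n q)"
      and j: "j < dim_col (perm_mat n (inv_into UNIV \<alpha>) * U n k * perm_mat n q)"
    then have i: "i < n" and j: "j < n" by simp_all
    have rhs: "(perm_mat n (inv_into UNIV \<alpha>) * U n k * perm_mat n q) $$ (i,j) = U n k $$ (\<alpha> i, q j)"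
      using perm_entry[OF iaperm q' U_carrier i j] iia by simp
    have qj: "q j < n" using permutes_in_image[OF q'] j by simp
    have lhs: "(A $$ (i,j) = 1) = B (p i) (q j)"
      unfolding B_def using permutes_inverses(2)[OF p'] permutes_inverses(2)[OF q'] by simp
    have "(A $$ (i,j) = 1) = (U n k $$ (\<alpha> i, q j) = 1)"
    proof (cases "p i < k")
      case True
      then have "\<alpha> i = p i" using i by (simp add: \<alpha>_def)
      then show ?thesis using lhs P1[OF True qj] True qj i arange[OF i] by (simp add: U_def)
    next
      case False
      then have ai: "\<alpha> i = \<tau> (p i)" using i by (simp add: \<alpha>_def)
      have "\<tau> (p i) \<in> {k..<n}" using tin[of "p i"] False pin[OF i] by simp
      then show ?thesis using lhs tB[of "p i" "q j"] False pin[OF i] qj ai by (auto simp: U_def)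
    qed
    then show "A $$ (i,j) = (perm_mat n (inv_into UNIV \<alpha>) * U n k * perm_mat n q) $$ (i,j)"
      using rhs bit_eqI by metis
  next
    show "dim_row A = dim_row (perm_mat n (inv_into UNIV \<alpha>) * U n k * perm_mat n q)" using A by simp
    show "dim_col A = dim_col (perm_mat n (inv_into UNIV \<alpha>) * U n k * perm_mat n q)" using A by simp
  qed
  then show ?thesis using iaperm q' by blast
qed

theorem mainTheorem1:
  fixes n k :: nat
  assumes "k \<le> n"
  shows "H n k = {perm_mat n \<pi> * U n k * perm_mat n \<sigma> | \<pi> \<sigma>.
                    \<pi> permutes {..<n} \<and> \<sigma> permutes {..<n}}"
proof (intro equalityI subsetI)
  fix A assume "A \<in> H n k"
  then show "A \<in> {perm_mat n \<pi> * U n k * perm_mat n \<sigma> | \<pi> \<sigma>.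
                    \<pi> permutes {..<n} \<and> \<sigma> permutes {..<n}}"
    using H_in_orbit[OF assms] by blast
next
  fix A assume "A \<in> {perm_mat n \<pi> * U n k * perm_mat n \<sigma> | \<pi> \<sigma>.
                    \<pi> permutes {..<n} \<and> \<sigma> permutes {..<n}}"
  then show "A \<in> H n k" using orbit_in_H[OF assms] by blast
qed


end
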